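(* Let $a=x_0<\cdots<x_N=b$ be a uniform partition with $x_j-x_{j-1}=h$ for all $j$, and let $s\in(0,3/2)$, $s\ne1/2$. Then the fractional stiffness matrix entries $$S_{jk}=\int_{\mathbb{R}}|\xi|^{2s}\,\mathscr{F}[\phi_j](\xi)\,\overline{\mathscr{F}[\phi_k](\xi)}\,d\xi,\qquad 1\le j,k\le N-1,$$ satisfy $$S_{jk}=\widehat C_s\,h^{1-2s}\sum_{i=-2}^{2}w_i\,\big|\,|k-j|+i\,\big|^{3-2s},\qquad w_0=6,\ w_{\pm1}=-4,\ w_{\pm2}=1,$$ where $\widehat C_s=\frac{1}{2\Gamma(4-2s)\cos(s\pi)}$. In particular $\mathbf S=(S_{jk})$ is a Toeplitz matrix.
   Context: $\phi_j$ ($1\le j\le N-1$) are the standard piecewise-linear hat functions on $\mathbb R$ associated with the nodes $x_0<\dots<x_N$ (equal to $1$ at $x_j$, $0$ at all other nodes, linear on each $[x_{\ell-1},x_\ell]$, and $0$ outside $(x_{j-1},x_{j+1})$). $\mathscr F[u](\xi)=\frac{1}{\sqrt{2\pi}}\int_{\mathbb R}u(x)e^{-\mathrm{i}x\xi}dx$. *)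

theory Defs
  imports "HOL-Analysis.Analysis"
begin

definition hat :: "(nat \<Rightarrow> real) \<Rightarrow> nat \<Rightarrow> real \<Rightarrow> real" where
  "hat x j t =
     (if x (j - 1) \<le> t \<and> t \<le> x j then (t - x (j - 1)) / (x j - x (j - 1))
      else if x j < t \<and> t \<le> x (j + 1) then (x (j + 1) - t) / (x (j + 1) - x j)
      else 0)"

definition fourier :: "(real \<Rightarrow> real) \<Rightarrow> real \<Rightarrow> complex" where
  "fourier u \<xi> = complex_of_real (1 / sqrt (2 * pi)) *
     (LINT t|lborel. complex_of_real (u t) * exp (- \<i> * complex_of_real (t * \<xi>)))"

definition frac_stiff :: "real \<Rightarrow> (nat \<Rightarrow> real) \<Rightarrow> nat \<Rightarrow> nat \<Rightarrow> complex" where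
  "frac_stiff s x j k =
     (LINT \<xi>|lborel. complex_of_real (\<bar>\<xi>\<bar> powr (2 * s)) *
        fourier (hat x j) \<xi> * cnj (fourier (hat x k) \<xi>))"

definition stiff_weight :: "int \<Rightarrow> real" where
  "stiff_weight i = (if i = 0 then 6 else if \<bar>i\<bar> = 1 then -4 else if \<bar>i\<bar> = 2 then 1 else 0)"

definition C_hat :: "real \<Rightarrow> real" where
  "C_hat s = 1 / (2 * Gamma (4 - 2 * s) * cos (s * pi))"

end

theory Submission
  imports Defs
begin


lemma nn_to_int:
  fixes f :: "'a \<Rightarrow> real"
  assumes "f \<in> borel_measurable M" "\<And>x. 0 \<le> f x" "(\<integral>\<^sup>+x. ennreal (f x) \<partial>M) = ennreal r" "0 \<le> r"
  shows "integrable M f" "integral\<^sup>L M f = r"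
proof -
  show "integrable M f" using assms by (intro integrableI_nonneg) auto
  show "integral\<^sup>L M f = r" using assms by (subst integral_eq_nn_integral) auto
qed

lemma gamma_scaled_nn:
  assumes x: "x > 0" and w: "w > (0::real)"
  shows "(\<integral>\<^sup>+t. ennreal (indicator {0<..} t * t powr (x - 1) * exp (- (w * t))) \<partial>lborel)
           = ennreal (Gamma x / w powr x)"
proof -
  have "ennreal (Gamma x) = (\<integral>\<^sup>+ t. ennreal (indicator {0..} t * t powr (x - 1) / exp t) \<partial>lborel)"
    using Gamma_conv_nn_integral_real[OF x] .
  also have "\<dots> = (\<integral>\<^sup>+ t. ennreal (indicator {0<..} t * t powr (x - 1) / exp t) \<partial>lborel)"
    by (intro nn_integral_cong_AE eventually_mono[OF AE_lborel_singleton[of 0]])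
       (auto simp: indicator_def)
  also have "\<dots> = (\<integral>\<^sup>+ t. ennreal (indicator {0<..} (w*t) * (w*t) powr (x - 1) / exp (w*t)) \<partial>distr lborel borel ((*) (1/w)))"
    using w by (subst nn_integral_distr) (auto intro!: nn_integral_cong simp: indicator_def)
  also have "distr lborel borel ((*) (1/w)) = density lborel (\<lambda>_. w)"
    using w by (subst lborel_distr_mult) auto
  also have "(\<integral>\<^sup>+ t. ennreal (indicator {0<..} (w*t) * (w*t) powr (x - 1) / exp (w*t)) \<partial>density lborel (\<lambda>_. ennreal w))
      = (\<integral>\<^sup>+ t. ennreal w * ennreal (indicator {0<..} (w*t) * (w*t) powr (x - 1) / exp (w*t)) \<partial>lborel)"
    by (subst nn_integral_density) auto
  also have "\<dots> = (\<integral>\<^sup>+ t. ennreal (w powr x) * ennreal (indicator {0<..} t * t powr (x - 1) * exp (- (w * t))) \<partial>lborel)"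
  proof (intro nn_integral_cong)
    fix t :: real
    show "ennreal w * ennreal (indicator {0<..} (w*t) * (w*t) powr (x - 1) / exp (w*t)) =
          ennreal (w powr x) * ennreal (indicator {0<..} t * t powr (x - 1) * exp (- (w * t)))"
    proof (cases "t > 0")
      case True
      have "w * ((w*t) powr (x - 1) / exp (w*t)) = w powr x * (t powr (x - 1) * exp (- (w * t)))"
        using True w by (simp add: powr_mult powr_diff exp_minus field_simps)
      then show ?thesis using True w
        by (simp add: ennreal_mult'[symmetric] indicator_def zero_less_mult_iff)
    next
      case False
      then show ?thesis using w by (simp add: indicator_def zero_less_mult_iff)
    qed
  qed
  also have "\<dots> = ennreal (w powr x) * (\<integral>\<^sup>+ t. ennreal (indicator {0<..} t * t powr (x - 1) * exp (- (w * t))) \<partial>lborel)"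
    by (subst nn_integral_cmult) auto
  finally have *: "ennreal (Gamma x) = ennreal (w powr x) * (\<integral>\<^sup>+ t. ennreal (indicator {0<..} t * t powr (x - 1) * exp (- (w * t))) \<partial>lborel)" .
  have "ennreal (Gamma x / w powr x) = ennreal (Gamma x) / ennreal (w powr x)"
    using w x by (simp add: divide_ennreal Gamma_real_pos less_imp_le)
  also have "\<dots> = (\<integral>\<^sup>+ t. ennreal (indicator {0<..} t * t powr (x - 1) * exp (- (w * t))) \<partial>lborel)"
    unfolding * using w by (subst mult.commute, subst mult_divide_eq_ennreal) auto
  finally show ?thesis ..
qed

lemma gamma_scaled:
  assumes x: "x > 0" and w: "w > (0::real)"
  shows "integrable lborel (\<lambda>t. indicator {0<..} t * t powr (x - 1) * exp (- (w * t)))"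
        "(\<integral>t. indicator {0<..} t * t powr (x - 1) * exp (- (w * t)) \<partial>lborel) = Gamma x / w powr x"
  using nn_to_int[OF _ _ gamma_scaled_nn[OF x w]] x w
  by (auto simp: Gamma_real_pos less_imp_le indicator_def)

lemma gamma_reflection_real:
  assumes "0 < p" "p < (1::real)"
  shows "Gamma p * Gamma (1 - p) = pi / sin (pi * p)"
proof -
  have "complex_of_real (Gamma p * Gamma (1 - p)) = Gamma (complex_of_real p) * Gamma (1 - complex_of_real p)"
    by (simp add: Gamma_complex_of_real) (metis Gamma_complex_of_real of_real_1 of_real_diff)
  also have "\<dots> = of_real pi / sin (of_real pi * of_real p)" by (rule Gamma_reflection_complex)
  also have "\<dots> = complex_of_real (pi / sin (pi * p))"
    by (simp add: sin_of_real[symmetric])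
  finally show ?thesis by (simp only: of_real_eq_iff)
qed

lemma mellin_inv1p_nn:
  assumes p: "0 < p" "p < (1::real)"
  shows "(\<integral>\<^sup>+y. ennreal (indicator {0<..} y * y powr (p - 1) / (1 + y)) \<partial>lborel)
          = ennreal (pi / sin (pi * p))"
proof -
  have "(\<integral>\<^sup>+y. ennreal (indicator {0<..} y * y powr (p - 1) / (1 + y)) \<partial>lborel)
     = (\<integral>\<^sup>+y. \<integral>\<^sup>+w. ennreal (indicator {0<..} y * indicator {0<..} w * y powr (p - 1) * exp (- ((1 + y) * w))) \<partial>lborel \<partial>lborel)"
  proof (intro nn_integral_cong)
    fix y :: real
    show "ennreal (indicator {0<..} y * y powr (p - 1) / (1 + y)) =
      (\<integral>\<^sup>+w. ennreal (indicator {0<..} y * indicator {0<..} w * y powr (p - 1) * exp (- ((1 + y) * w))) \<partial>lborel)"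
    proof (cases "y > 0")
      case True
      have "(\<integral>\<^sup>+w. ennreal (indicator {0<..} y * indicator {0<..} w * y powr (p - 1) * exp (- ((1 + y) * w))) \<partial>lborel)
         = (\<integral>\<^sup>+w. ennreal (y powr (p - 1)) * ennreal (indicator {0<..} w * w powr (1 - 1) * exp (- ((1 + y) * w))) \<partial>lborel)"
        using True by (intro nn_integral_cong) (auto simp: indicator_def ennreal_mult'[symmetric])
      also have "\<dots> = ennreal (y powr (p - 1)) * ennreal (Gamma 1 / (1 + y) powr 1)"
        using True gamma_scaled_nn[of 1 "1+y"] by (subst nn_integral_cmult) auto
      also have "\<dots> = ennreal (indicator {0<..} y * y powr (p - 1) / (1 + y))"
        using True by (simp add: ennreal_mult'[symmetric])
      finally show ?thesis ..
    qed (auto simp: indicator_def)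
  qed
  also have "\<dots> = (\<integral>\<^sup>+w. \<integral>\<^sup>+y. ennreal (indicator {0<..} y * indicator {0<..} w * y powr (p - 1) * exp (- ((1 + y) * w))) \<partial>lborel \<partial>lborel)"
    by (subst lborel_pair.Fubini') (auto simp: case_prod_unfold)
  also have "\<dots> = (\<integral>\<^sup>+w. ennreal (Gamma p) * ennreal (indicator {0<..} w * w powr ((1 - p) - 1) * exp (- (1 * w))) \<partial>lborel)"
  proof (intro nn_integral_cong)
    fix w :: real
    show "(\<integral>\<^sup>+y. ennreal (indicator {0<..} y * indicator {0<..} w * y powr (p - 1) * exp (- ((1 + y) * w))) \<partial>lborel) =
       ennreal (Gamma p) * ennreal (indicator {0<..} w * w powr ((1 - p) - 1) * exp (- (1 * w)))"
    proof (cases "w > 0")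
      case True
      have "(\<integral>\<^sup>+y. ennreal (indicator {0<..} y * indicator {0<..} w * y powr (p - 1) * exp (- ((1 + y) * w))) \<partial>lborel)
         = (\<integral>\<^sup>+y. ennreal (exp (- w)) * ennreal (indicator {0<..} y * y powr (p - 1) * exp (- (w * y))) \<partial>lborel)"
        using True by (intro nn_integral_cong) (auto simp: indicator_def ennreal_mult'[symmetric] algebra_simps exp_diff exp_minus divide_inverse)
      also have "\<dots> = ennreal (exp (- w)) * ennreal (Gamma p / w powr p)"
        using True p by (subst nn_integral_cmult) (auto simp: gamma_scaled_nn)
      also have "\<dots> = ennreal (Gamma p) * ennreal (indicator {0<..} w * w powr ((1 - p) - 1) * exp (- (1 * w)))"
        using True p by (simp add: ennreal_mult'[symmetric] Gamma_real_pos less_imp_le powr_minus powr_diff divide_simps)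
      finally show ?thesis .
    qed (auto simp: indicator_def)
  qed
  also have "\<dots> = ennreal (Gamma p) * ennreal (Gamma (1 - p) / 1 powr (1 - p))"
    using p gamma_scaled_nn[of "1 - p" 1] by (subst nn_integral_cmult) auto
  also have "\<dots> = ennreal (pi / sin (pi * p))"
    using p by (simp add: ennreal_mult'[symmetric] Gamma_real_pos less_imp_le gamma_reflection_real)
  finally show ?thesis .
qed



lemma mellin_inv1p:
  assumes p: "0 < p" "p < (1::real)"
  shows "((\<lambda>y. y powr (p - 1) / (1 + y)) has_integral (pi / sin (pi * p))) {0<..}"
        "(\<lambda>y. y powr (p - 1) / (1 + y)) absolutely_integrable_on {0<..}"
proof -
  have sp: "sin (pi * p) > 0" using p by (intro sin_gt_zero) auto
  have "((\<lambda>y. indicator {0<..} y * y powr (p - 1) / (1 + y)) has_integral (pi / sin (pi * p))) UNIV"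
    using mellin_inv1p_nn[OF p] sp
    by (intro nn_integral_has_integral) (auto simp: indicator_def)
  moreover have "(\<lambda>y. indicator {0<..} y * y powr (p - 1) / (1 + y)) = (\<lambda>y. if y \<in> {0<..} then y powr (p - 1) / (1 + y) else 0)"
    by (auto simp: indicator_def)
  ultimately show 1: "((\<lambda>y. y powr (p - 1) / (1 + y)) has_integral (pi / sin (pi * p))) {0<..}"
    using has_integral_restrict_UNIV[of "{0<..}" "\<lambda>y. y powr (p - 1) / (1 + y)"] by simp
  show "(\<lambda>y. y powr (p - 1) / (1 + y)) absolutely_integrable_on {0<..}"
    using 1 by (subst absolutely_integrable_on_iff_nonneg) (auto simp: has_integral_integrable)
qed

lemma mellin_rat:
  assumes a: "-1 < a" "a < (1::real)" and c: "c > 0"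
  shows "(\<lambda>t. t powr a / (t\<^sup>2 + c\<^sup>2)) absolutely_integrable_on {0<..} \<and>
         integral {0<..} (\<lambda>t. t powr a / (t\<^sup>2 + c\<^sup>2)) = c powr (a - 1) * pi / (2 * cos (pi * a / 2))"
proof -
  define p where "p = (a + 1) / 2"
  have p: "0 < p" "p < 1" using a by (auto simp: p_def)
  define K where "K = c powr (a - 1) / 2"
  define g where "g y = c * sqrt y" for y :: real
  define g' where "g' y = c / (2 * sqrt y)" for y :: real
  have der: "(g has_field_derivative g' y) (at y within {0<..})" if "y \<in> {0<..}" for y
    unfolding g_def g'_def using that
    by (auto intro!: derivative_eq_intros simp: field_simps)
  have inj: "inj_on g {0<..}" unfolding g_def using c by (auto simp: inj_on_def)
  have img: "g ` {0<..} = {0<..}"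
  proof
    show "g ` {0<..} \<subseteq> {0<..}" using c by (auto simp: g_def)
    show "{0<..} \<subseteq> g ` {0<..}"
    proof
      fix t :: real assume "t \<in> {0<..}"
      then have "t = g ((t / c)\<^sup>2)" "(t/c)\<^sup>2 \<in> {0<..}" using c by (auto simp: g_def real_sqrt_divide)
      then show "t \<in> g ` {0<..}" by blast
    qed
  qed
  have eq: "\<bar>g' y\<bar> * ((g y) powr a / ((g y)\<^sup>2 + c\<^sup>2)) = K * (y powr (p - 1) / (1 + y))"
    if "y \<in> {0<..}" for y
  proof -
    from that have y: "y > 0" by auto
    have A1: "(g y) powr a = c powr a * y powr (a / 2)"
      using y c by (simp add: g_def powr_mult powr_half_sqrt[symmetric] powr_powr)
    have A2: "(g y)\<^sup>2 + c\<^sup>2 = c\<^sup>2 * (1 + y)" using y by (simp add: g_def power_mult_distrib algebra_simps)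
    have A3: "\<bar>g' y\<bar> = c / 2 * y powr (- 1/2)"
      using y c by (simp add: g'_def powr_minus powr_half_sqrt divide_simps)
    have A4: "y powr (p - 1) = y powr (a / 2) * y powr (- 1/2)"
      using y by (simp add: p_def powr_add[symmetric] field_simps)
    have A5: "c powr (a - 1) = c powr a / c" using c by (simp add: powr_diff)
    have "\<bar>g' y\<bar> * ((g y) powr a / ((g y)\<^sup>2 + c\<^sup>2)) = (c / 2 * y powr (- 1/2)) * (c powr a * y powr (a / 2) / (c\<^sup>2 * (1 + y)))"
      by (simp only: A1 A2 A3)
    also have "\<dots> = (c powr a / c) / 2 * (y powr (a / 2) * y powr (- 1/2) / (1 + y))"
      using y c by (simp add: divide_simps power2_eq_square)
    also have "\<dots> = K * (y powr (p - 1) / (1 + y))" by (simp add: K_def A4 A5)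
    finally show ?thesis .
  qed
  have "((\<lambda>y. K * (y powr (p - 1) / (1 + y))) has_integral (K * (pi / sin (pi * p)))) {0<..}"
    by (intro has_integral_mult_right mellin_inv1p p)
  then have I: "((\<lambda>y. \<bar>g' y\<bar> * ((g y) powr a / ((g y)\<^sup>2 + c\<^sup>2))) has_integral (K * (pi / sin (pi * p)))) {0<..}"
    by (rule has_integral_spike_eq[where S = "{}", THEN iffD2, rotated 2]) (use eq in auto)
  have AI: "(\<lambda>y. \<bar>g' y\<bar> * ((g y) powr a / ((g y)\<^sup>2 + c\<^sup>2))) absolutely_integrable_on {0<..}"
    using I by (subst absolutely_integrable_on_iff_nonneg) (auto simp: has_integral_integrable g_def g'_def)
  have "(\<lambda>t. t powr a / (t\<^sup>2 + c\<^sup>2)) absolutely_integrable_on (g ` {0<..}) \<and>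
        integral (g ` {0<..}) (\<lambda>t. t powr a / (t\<^sup>2 + c\<^sup>2)) = K * (pi / sin (pi * p))"
    using has_absolute_integral_change_of_variables_1'[where S="{0<..}" and g=g and g'=g'
        and f="\<lambda>t. t powr a / (t\<^sup>2 + c\<^sup>2)" and b = "K * (pi / sin (pi * p))"]
    using AI I der inj by (auto simp: integral_unique)
  moreover have "sin (pi * p) = cos (pi * a / 2)"
    by (simp add: p_def field_simps sin_cos_eq)
  ultimately show ?thesis unfolding img by (simp add: K_def)
qed



lemma exp_integrable_Ioi:
  assumes t: "t > (0::real)"
  shows "set_integrable lborel {0<..} (\<lambda>u. exp (- (t * u)))"
proof -
  have "integrable lborel (\<lambda>u. indicator {0<..} u * u powr (1 - 1) * exp (- (t * u)))"
    using gamma_scaled(1)[of 1 t] t by simp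
  moreover have "(\<lambda>u. indicator {0<..} u * u powr (1 - 1) * exp (- (t * u))) = (\<lambda>x. indicator {0<..} x *\<^sub>R exp (- (t * x)))"
    by (auto simp: indicator_def fun_eq_iff)
  ultimately show ?thesis unfolding set_integrable_def by simp
qed

lemma laplace_cos:
  assumes t: "t > (0::real)"
  shows "set_integrable lborel {0<..} (\<lambda>u. exp (- (t * u)) * cos (c * u))"
        "(LINT u:{0<..}|lborel. exp (- (t * u)) * cos (c * u)) = t / (t\<^sup>2 + c\<^sup>2)"
proof -
  show I: "set_integrable lborel {0<..} (\<lambda>u. exp (- (t * u)) * cos (c * u))"
    unfolding set_integrable_def
  proof (rule Bochner_Integration.integrable_bound[OF exp_integrable_Ioi[OF t, unfolded set_integrable_def]])
    show "AE x in lborel. norm (indicator {0<..} x *\<^sub>R (exp (- (t * x)) * cos (c * x))) \<le> norm (indicator {0<..} x *\<^sub>R exp (- (t * x)))"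
      by (intro AE_I2) (auto simp: indicator_def abs_mult intro!: mult_left_le)
  qed auto
  have tc: "t\<^sup>2 + c\<^sup>2 > 0" using t by (simp add: add_pos_nonneg)
  have tc': "t * t + c * c \<noteq> 0" using t by (simp add: add_pos_nonneg)
  let ?F = "\<lambda>u. exp (- (t * u)) * (c * sin (c * u) - t * cos (c * u)) / (t\<^sup>2 + c\<^sup>2)"
  have "(LBINT u=ereal 0..\<infinity>. exp (- (t * u)) * cos (c * u)) = 0 - (- t / (t\<^sup>2 + c\<^sup>2))"
  proof (rule interval_integral_FTC_integrable)
    show "(?F has_vector_derivative exp (- (t * x)) * cos (c * x)) (at x)" for x
    proof -
      have e: "((cos (c * x) * c * c + sin (c * x) * c * t) * exp (- (t * x)) -
          exp (- (t * x)) * t * (c * sin (c * x) - t * cos (c * x))) = (exp (- (t * x)) * cos (c * x)) * (t\<^sup>2 + c\<^sup>2)"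
        by (simp add: algebra_simps power2_eq_square)
      show ?thesis
        using tc by (auto intro!: derivative_eq_intros simp: has_real_derivative_iff_has_vector_derivative[symmetric] e)
    qed
    show "set_integrable lborel (einterval (ereal 0) \<infinity>) (\<lambda>u. exp (- (t * u)) * cos (c * u))"
      using I by (simp add: einterval_def greaterThan_def)
    show "((?F \<circ> real_of_ereal) \<longlongrightarrow> - t / (t\<^sup>2 + c\<^sup>2)) (at_right (ereal 0))"
      using t by (auto simp: ereal_tendsto_simps intro!: tendsto_eq_intros)
    have *: "((\<lambda>u. exp (- (t * u))) \<longlongrightarrow> 0) at_top"
      using t by (auto intro!: exp_at_bot[THEN filterlim_compose] filterlim_tendsto_pos_mult_at_top filterlim_ident
             simp: filterlim_uminus_at_bot)
    have lim: "((\<lambda>u. exp (- (t * u)) * (\<bar>c\<bar> + t) / (t\<^sup>2 + c\<^sup>2)) \<longlongrightarrow> 0) at_top"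
      by (rule tendsto_divide_zero, rule tendsto_mult_left_zero, rule *)
    have **: "(?F \<longlongrightarrow> 0) at_top"
    proof (rule Lim_null_comparison[OF _ lim])
      show "\<forall>\<^sub>F x in at_top. norm (?F x) \<le> exp (- (t * x)) * (\<bar>c\<bar> + t) / (t\<^sup>2 + c\<^sup>2)"
      proof (intro always_eventually allI)
        fix x :: real
        have "\<bar>c * sin (c * x) - t * cos (c * x)\<bar> \<le> \<bar>c\<bar> + t"
        proof -
          have "\<bar>c * sin (c * x)\<bar> \<le> \<bar>c\<bar>" by (simp add: abs_mult mult_left_le)
          moreover have "\<bar>t * cos (c * x)\<bar> \<le> t" using t by (simp add: abs_mult mult_left_le)
          ultimately show ?thesis by linarith
        qed
        then show "norm (?F x) \<le> exp (- (t * x)) * (\<bar>c\<bar> + t) / (t\<^sup>2 + c\<^sup>2)"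
          using tc by (simp add: abs_mult divide_right_mono mult_left_mono)
      qed
    qed
    show "((?F \<circ> real_of_ereal) \<longlongrightarrow> 0) (at_left \<infinity>)"
      unfolding ereal_tendsto_simps using ** by simp
  qed (auto intro!: continuous_intros)
  then show "(LINT u:{0<..}|lborel. exp (- (t * u)) * cos (c * u)) = t / (t\<^sup>2 + c\<^sup>2)"
    by (simp add: interval_integral_to_infinity_eq)
qed



lemma laplace_cos_ind:
  assumes t: "t > (0::real)"
  shows "integrable lborel (\<lambda>u. indicator {0<..} u * (exp (- (t * u)) * cos (c * u)))"
        "(\<integral>u. indicator {0<..} u * (exp (- (t * u)) * cos (c * u)) \<partial>lborel) = t / (t\<^sup>2 + c\<^sup>2)"
  using laplace_cos[OF t, of c] unfolding set_integrable_def set_lebesgue_integral_def by auto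

lemma fubini_main:
  fixes I :: "int set" and w c :: "int \<Rightarrow> real" and \<gamma> :: real
  assumes fin: "finite I" and g: "\<gamma> > 0"
  assumes int: "set_integrable lborel {0<..} (\<lambda>u. u powr (- \<gamma>) * (\<Sum>i\<in>I. w i * cos (c i * u)))"
  shows "Gamma \<gamma> * (LINT u:{0<..}|lborel. u powr (- \<gamma>) * (\<Sum>i\<in>I. w i * cos (c i * u))) =
         (LINT t:{0<..}|lborel. t powr (\<gamma> - 1) * (\<Sum>i\<in>I. w i * (t / (t\<^sup>2 + (c i)\<^sup>2))))"
proof -
  define G where "G u = (\<Sum>i\<in>I. w i * cos (c i * u))" for u
  define F where "F u t = indicator {0<..} u * indicator {0<..} t * (t powr (\<gamma> - 1) * exp (- (t * u)) * G u)" for u t :: real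
  have Gm[measurable]: "G \<in> borel_measurable borel" unfolding G_def by measurable
  have Fm: "case_prod F \<in> borel_measurable (lborel \<Otimes>\<^sub>M lborel)"
    unfolding F_def by measurable
  have inner_t: "(\<integral>t. F u t \<partial>lborel) = indicator {0<..} u * G u * (Gamma \<gamma> * u powr (- \<gamma>))" for u
  proof (cases "u > 0")
    case True
    have "(\<integral>t. F u t \<partial>lborel) = (\<integral>t. G u * (indicator {0<..} t * t powr (\<gamma> - 1) * exp (- (u * t))) \<partial>lborel)"
      using True by (intro Bochner_Integration.integral_cong) (auto simp: F_def indicator_def mult_ac)
    also have "\<dots> = G u * (Gamma \<gamma> / u powr \<gamma>)"
      using True g by (simp add: gamma_scaled)
    finally show ?thesis using True by (simp add: powr_minus divide_inverse)
  qed (simp add: F_def indicator_def)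
  have inner_tn: "(\<integral>t. norm (F u t) \<partial>lborel) = indicator {0<..} u * \<bar>G u\<bar> * (Gamma \<gamma> * u powr (- \<gamma>))" for u
  proof (cases "u > 0")
    case True
    have "(\<integral>t. norm (F u t) \<partial>lborel) = (\<integral>t. \<bar>G u\<bar> * (indicator {0<..} t * t powr (\<gamma> - 1) * exp (- (u * t))) \<partial>lborel)"
      using True by (intro Bochner_Integration.integral_cong) (auto simp: F_def indicator_def mult_ac abs_mult)
    also have "\<dots> = \<bar>G u\<bar> * (Gamma \<gamma> / u powr \<gamma>)"
      using True g by (simp add: gamma_scaled)
    finally show ?thesis using True by (simp add: powr_minus divide_inverse)
  qed (simp add: F_def indicator_def)
  have intF: "integrable (lborel \<Otimes>\<^sub>M lborel) (case_prod F)"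
  proof (rule lborel_pair.Fubini_integrable[OF Fm])
    have "integrable lborel (\<lambda>u. indicator {0<..} u *\<^sub>R (u powr (- \<gamma>) * G u))"
      using int unfolding set_integrable_def G_def .
    then have "integrable lborel (\<lambda>u. Gamma \<gamma> * norm (indicator {0<..} u *\<^sub>R (u powr (- \<gamma>) * G u)))"
      by (intro integrable_mult_right integrable_norm)
    then show "integrable lborel (\<lambda>x. \<integral>y. norm (case_prod F (x, y)) \<partial>lborel)"
      unfolding inner_tn case_prod_conv
      by (rule Bochner_Integration.integrable_cong[THEN iffD1, OF refl, rotated])
         (auto simp: indicator_def abs_mult)
    show "AE x in lborel. integrable lborel (\<lambda>y. case_prod F (x, y))"
    proof (intro AE_I2)
      fix u :: real
      show "integrable lborel (\<lambda>y. case_prod F (u, y))"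
      proof (cases "u > 0")
        case True
        have "integrable lborel (\<lambda>t. G u * (indicator {0<..} t * t powr (\<gamma> - 1) * exp (- (u * t))))"
          using True g by (intro integrable_mult_right gamma_scaled)
        then show ?thesis
          by (rule Bochner_Integration.integrable_cong[THEN iffD1, OF refl, rotated])
             (use True in \<open>auto simp: F_def indicator_def mult_ac\<close>)
      next
        case False
        then have "(\<lambda>y. case_prod F (u, y)) = (\<lambda>y. 0)" by (auto simp: F_def indicator_def fun_eq_iff)
        then show ?thesis by simp
      qed
    qed
  qed
  have "(\<integral>t. (\<integral>u. F u t \<partial>lborel) \<partial>lborel) = (\<integral>u. (\<integral>t. F u t \<partial>lborel) \<partial>lborel)"
    using lborel_pair.Fubini_integral[OF intF] .
  also have "(\<integral>u. (\<integral>t. F u t \<partial>lborel) \<partial>lborel) = (\<integral>u. Gamma \<gamma> * (indicator {0<..} u *\<^sub>R (u powr (- \<gamma>) * G u)) \<partial>lborel)"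
    unfolding inner_t by (intro Bochner_Integration.integral_cong) (auto simp: indicator_def)
  also have "\<dots> = Gamma \<gamma> * (LINT u:{0<..}|lborel. u powr (- \<gamma>) * G u)"
    by (simp add: set_lebesgue_integral_def)
  also have "(\<integral>t. (\<integral>u. F u t \<partial>lborel) \<partial>lborel) = (\<integral>t. indicator {0<..} t *\<^sub>R (t powr (\<gamma> - 1) * (\<Sum>i\<in>I. w i * (t / (t\<^sup>2 + (c i)\<^sup>2)))) \<partial>lborel)"
  proof (intro Bochner_Integration.integral_cong refl)
    fix t :: real
    show "(\<integral>u. F u t \<partial>lborel) = indicator {0<..} t *\<^sub>R (t powr (\<gamma> - 1) * (\<Sum>i\<in>I. w i * (t / (t\<^sup>2 + (c i)\<^sup>2))))"
    proof (cases "t > 0")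
      case True
      have "(\<integral>u. F u t \<partial>lborel) = (\<integral>u. (\<Sum>i\<in>I. t powr (\<gamma> - 1) * w i * (indicator {0<..} u * (exp (- (t * u)) * cos (c i * u)))) \<partial>lborel)"
        using True by (intro Bochner_Integration.integral_cong)
          (auto simp: F_def G_def indicator_def sum_distrib_left mult_ac)
      also have "\<dots> = (\<Sum>i\<in>I. (\<integral>u. t powr (\<gamma> - 1) * w i * (indicator {0<..} u * (exp (- (t * u)) * cos (c i * u))) \<partial>lborel))"
        using True by (intro Bochner_Integration.integral_sum integrable_mult_right laplace_cos_ind)
      also have "\<dots> = (\<Sum>i\<in>I. t powr (\<gamma> - 1) * w i * (t / (t\<^sup>2 + (c i)\<^sup>2)))"
        using True by (simp add: laplace_cos_ind)
      finally show ?thesis using True by (simp add: sum_distrib_left mult_ac)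
    qed (simp add: F_def indicator_def)
  qed
  finally show ?thesis by (simp add: set_lebesgue_integral_def G_def)
qed



lemma abs_to_lborel:
  fixes f :: "real \<Rightarrow> real"
  assumes f: "f \<in> borel_measurable borel" and S: "S \<in> sets borel" and ai: "f absolutely_integrable_on S"
  shows "set_integrable lborel S f" "(LINT x:S|lborel. f x) = integral S f"
proof -
  have m: "(\<lambda>x. indicator S x *\<^sub>R f x) \<in> borel_measurable lborel" using f S by measurable
  show si: "set_integrable lborel S f"
    using ai m unfolding set_integrable_def
    by (subst (asm) integrable_completion) auto
  show "(LINT x:S|lborel. f x) = integral S f"
    using set_borel_integral_eq_integral(2)[OF si] .
qed

lemma sum_m2_2: "(\<Sum>i\<in>{-2..2::int}. f i) = f (-2) + f (-1) + f 0 + f 1 + f 2"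
proof -
  have "{-2..2::int} = {-2, -1, 0, 1, 2}" by auto
  then show ?thesis by (simp add: algebra_simps)
qed

lemma stiff_weight_vals:
  "stiff_weight (-2) = 1" "stiff_weight (-1) = -4" "stiff_weight 0 = 6" "stiff_weight 1 = -4" "stiff_weight 2 = 1"
  by (simp_all add: stiff_weight_def)

lemma weights_moment0: "(\<Sum>i\<in>{-2..2::int}. stiff_weight i) = 0"
  by (simp add: sum_m2_2 stiff_weight_vals)

lemma weights_moment2: "(\<Sum>i\<in>{-2..2::int}. stiff_weight i * (m + real_of_int i)\<^sup>2) = 0"
  by (simp add: sum_m2_2 stiff_weight_vals power2_eq_square algebra_simps)

lemma weights_trig:
  "(\<Sum>i\<in>{-2..2::int}. stiff_weight i * cos ((m + real_of_int i) * u)) = (2 - 2 * cos u)\<^sup>2 * cos (m * u)"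
proof -
  have e2: "cos ((m + real_of_int (-2)) * u) = cos (m*u) * cos (2*u) + sin (m*u) * sin (2*u)"
    using cos_diff[of "m*u" "2*u"] by (simp add: algebra_simps)
  have e1: "cos ((m + real_of_int (-1)) * u) = cos (m*u) * cos u + sin (m*u) * sin u"
    using cos_diff[of "m*u" "u"] by (simp add: algebra_simps)
  have e0: "cos ((m + real_of_int 0) * u) = cos (m*u)" by simp
  have f1: "cos ((m + real_of_int 1) * u) = cos (m*u) * cos u - sin (m*u) * sin u"
    using cos_add[of "m*u" "u"] by (simp add: algebra_simps)
  have f2: "cos ((m + real_of_int 2) * u) = cos (m*u) * cos (2*u) - sin (m*u) * sin (2*u)"
    using cos_add[of "m*u" "2*u"] by (simp add: algebra_simps)
  have d: "cos (2 * u) = 2 * (cos u)\<^sup>2 - 1" by (simp add: cos_double_cos)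
  show ?thesis
    unfolding sum_m2_2 stiff_weight_vals e2 e1 e0 f1 f2 d
    by (simp add: power2_eq_square algebra_simps)
qed



lemma rat_term:
  assumes a: "-1 < a" "a < (1::real)" and n: "n \<ge> 1"
  shows "integrable lborel (\<lambda>t. indicator {0<..} t * ((c\<^sup>2)^n * (t powr a / (t\<^sup>2 + c\<^sup>2))))"
        "(\<integral>t. indicator {0<..} t * ((c\<^sup>2)^n * (t powr a / (t\<^sup>2 + c\<^sup>2))) \<partial>lborel)
           = \<bar>c\<bar> powr (a - 1 + 2 * n) * pi / (2 * cos (pi * a / 2))"
proof -
  have "integrable lborel (\<lambda>t. indicator {0<..} t * ((c\<^sup>2)^n * (t powr a / (t\<^sup>2 + c\<^sup>2)))) \<and>
        (\<integral>t. indicator {0<..} t * ((c\<^sup>2)^n * (t powr a / (t\<^sup>2 + c\<^sup>2))) \<partial>lborel)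
           = \<bar>c\<bar> powr (a - 1 + 2 * n) * pi / (2 * cos (pi * a / 2))"
  proof (cases "c = 0")
    case True
    obtain k where "n = Suc k" using n by (cases n) auto
    then have z: "(c\<^sup>2)^n = 0" using True by simp
    have f0: "(\<lambda>t. indicator {0<..} t * ((c\<^sup>2)^n * (t powr a / (t\<^sup>2 + c\<^sup>2)))) = (\<lambda>t. 0)"
      by (simp only: z mult_zero_left mult_zero_right)
    have p0: "\<bar>c\<bar> powr (a - 1 + 2 * n) = 0" using True by simp
    show ?thesis unfolding f0 p0 by simp
  next
    case False
    then have c: "\<bar>c\<bar> > 0" by simp
    from mellin_rat[OF a c] have mr:
      "(\<lambda>t. t powr a / (t\<^sup>2 + \<bar>c\<bar>\<^sup>2)) absolutely_integrable_on {0<..}"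
      "integral {0<..} (\<lambda>t. t powr a / (t\<^sup>2 + \<bar>c\<bar>\<^sup>2)) = \<bar>c\<bar> powr (a - 1) * pi / (2 * cos (pi * a / 2))"
      by auto
    have meas: "(\<lambda>t. t powr a / (t\<^sup>2 + c\<^sup>2)) \<in> borel_measurable borel" by measurable
    note L = abs_to_lborel[OF meas _ mr(1)[unfolded power2_abs]]
    have i1: "integrable lborel (\<lambda>t. indicator {0<..} t *\<^sub>R (t powr a / (t\<^sup>2 + c\<^sup>2)))"
      using L(1) unfolding set_integrable_def by simp
    have v1: "(\<integral>t. indicator {0<..} t *\<^sub>R (t powr a / (t\<^sup>2 + c\<^sup>2)) \<partial>lborel) = \<bar>c\<bar> powr (a - 1) * pi / (2 * cos (pi * a / 2))"
      using L(2) mr(2) unfolding set_lebesgue_integral_def power2_abs by simp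
    have eqf: "(\<lambda>t. indicator {0<..} t * ((c\<^sup>2)^n * (t powr a / (t\<^sup>2 + c\<^sup>2)))) = (\<lambda>t. (c\<^sup>2)^n * (indicator {0<..} t *\<^sub>R (t powr a / (t\<^sup>2 + c\<^sup>2))))"
      by (auto simp: fun_eq_iff)
    have pw: "(c\<^sup>2)^n * \<bar>c\<bar> powr (a - 1) = \<bar>c\<bar> powr (a - 1 + 2 * n)"
    proof -
      have "(c\<^sup>2)^n = \<bar>c\<bar> ^ (2 * n)" by (simp only: power_mult power2_abs)
      also have "\<dots> = \<bar>c\<bar> powr (real (2 * n))" using c by (simp only: powr_realpow)
      finally have "(c\<^sup>2)^n * \<bar>c\<bar> powr (a - 1) = \<bar>c\<bar> powr (real (2 * n) + (a - 1))"
        by (simp only: powr_add)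
      then show ?thesis by (simp add: algebra_simps)
    qed
    have "integrable lborel (\<lambda>t. (c\<^sup>2)^n * (indicator {0<..} t *\<^sub>R (t powr a / (t\<^sup>2 + c\<^sup>2))))"
      by (rule integrable_mult_right[OF i1])
    moreover have "(\<integral>t. (c\<^sup>2)^n * (indicator {0<..} t *\<^sub>R (t powr a / (t\<^sup>2 + c\<^sup>2))) \<partial>lborel)
       = \<bar>c\<bar> powr (a - 1 + 2 * n) * pi / (2 * cos (pi * a / 2))"
      unfolding integral_mult_right_zero v1 pw[symmetric] by simp
    ultimately show ?thesis unfolding eqf by simp
  qed
  then show "integrable lborel (\<lambda>t. indicator {0<..} t * ((c\<^sup>2)^n * (t powr a / (t\<^sup>2 + c\<^sup>2))))"
        "(\<integral>t. indicator {0<..} t * ((c\<^sup>2)^n * (t powr a / (t\<^sup>2 + c\<^sup>2))) \<partial>lborel)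
           = \<bar>c\<bar> powr (a - 1 + 2 * n) * pi / (2 * cos (pi * a / 2))" by auto
qed



lemma sum_rat_terms:
  assumes a: "-1 < a" "a < (1::real)" and n: "n \<ge> 1"
  shows "(\<integral>t. (\<Sum>i\<in>{-2..2::int}. e i * (indicator {0<..} t * (((m + real_of_int i)\<^sup>2)^n * (t powr a / (t\<^sup>2 + (m + real_of_int i)\<^sup>2))))) \<partial>lborel)
     = (\<Sum>i\<in>{-2..2::int}. e i * \<bar>m + real_of_int i\<bar> powr (a - 1 + 2 * n)) * pi / (2 * cos (pi * a / 2))"
proof -
  have "(\<integral>t. (\<Sum>i\<in>{-2..2::int}. e i * (indicator {0<..} t * (((m + real_of_int i)\<^sup>2)^n * (t powr a / (t\<^sup>2 + (m + real_of_int i)\<^sup>2))))) \<partial>lborel)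
     = (\<Sum>i\<in>{-2..2::int}. (\<integral>t. e i * (indicator {0<..} t * (((m + real_of_int i)\<^sup>2)^n * (t powr a / (t\<^sup>2 + (m + real_of_int i)\<^sup>2)))) \<partial>lborel))"
    by (intro Bochner_Integration.integral_sum integrable_mult_right rat_term a n)
  also have "\<dots> = (\<Sum>i\<in>{-2..2::int}. e i * (\<bar>m + real_of_int i\<bar> powr (a - 1 + 2 * n) * pi / (2 * cos (pi * a / 2))))"
    by (intro sum.cong refl) (simp only: integral_mult_right_zero rat_term(2)[OF a n])
  also have "\<dots> = (\<Sum>i\<in>{-2..2::int}. e i * \<bar>m + real_of_int i\<bar> powr (a - 1 + 2 * n)) * (pi / (2 * cos (pi * a / 2)))"
    by (subst sum_distrib_right) (simp add: mult.assoc)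
  finally show ?thesis by simp
qed

lemma t_integral:
  assumes g: "1 < \<gamma>" "\<gamma> < 4" "\<gamma> \<noteq> 3"
  shows "(LINT t:{0<..}|lborel. t powr (\<gamma> - 1) * (\<Sum>i\<in>{-2..2::int}. stiff_weight i * (t / (t\<^sup>2 + (m + real_of_int i)\<^sup>2))))
     = (\<Sum>i\<in>{-2..2::int}. stiff_weight i * \<bar>m + real_of_int i\<bar> powr (\<gamma> - 1)) * pi / (2 * cos (pi * \<gamma> / 2))"
proof (cases "\<gamma> < 3")
  case True
  define a where "a = \<gamma> - 2"
  have a: "-1 < a" "a < 1" using g True by (auto simp: a_def)
  have pt: "indicator {0<..} t *\<^sub>R (t powr (\<gamma> - 1) * (\<Sum>i\<in>{-2..2::int}. stiff_weight i * (t / (t\<^sup>2 + (m + real_of_int i)\<^sup>2))))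
      = (\<Sum>i\<in>{-2..2::int}. (- stiff_weight i) * (indicator {0<..} t * (((m + real_of_int i)\<^sup>2)^1 * (t powr a / (t\<^sup>2 + (m + real_of_int i)\<^sup>2)))))" for t
  proof (cases "t > 0")
    case tp: True
    define P where "P = t powr a"
    have tg: "t powr (\<gamma> - 1) = P * t"
    proof -
      have "t powr (\<gamma> - 1) = t powr (a + 1)" by (simp add: a_def)
      also have "\<dots> = P * t powr 1" unfolding P_def by (rule powr_add)
      finally show ?thesis using tp by simp
    qed
    have each: "t powr (\<gamma> - 1) * (stiff_weight i * (t / (t\<^sup>2 + (m + real_of_int i)\<^sup>2)))
        = stiff_weight i * P - stiff_weight i * ((m + real_of_int i)\<^sup>2 * (P / (t\<^sup>2 + (m + real_of_int i)\<^sup>2)))" for i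
    proof -
      have pos: "t\<^sup>2 + (m + real_of_int i)\<^sup>2 > 0" using tp by (simp add: add_pos_nonneg)
      show ?thesis unfolding tg using pos by (simp add: field_simps power2_eq_square)
    qed
    have "t powr (\<gamma> - 1) * (\<Sum>i\<in>{-2..2::int}. stiff_weight i * (t / (t\<^sup>2 + (m + real_of_int i)\<^sup>2)))
        = (\<Sum>i\<in>{-2..2::int}. stiff_weight i * P - stiff_weight i * ((m + real_of_int i)\<^sup>2 * (P / (t\<^sup>2 + (m + real_of_int i)\<^sup>2))))"
      unfolding sum_distrib_left by (rule sum.cong[OF refl each])
    also have "\<dots> = (\<Sum>i\<in>{-2..2::int}. stiff_weight i) * P - (\<Sum>i\<in>{-2..2::int}. stiff_weight i * ((m + real_of_int i)\<^sup>2 * (P / (t\<^sup>2 + (m + real_of_int i)\<^sup>2))))"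
      by (simp add: sum_subtractf sum_distrib_right)
    finally show ?thesis using tp by (simp add: weights_moment0 P_def sum_negf)
  qed simp
  have "(LINT t:{0<..}|lborel. t powr (\<gamma> - 1) * (\<Sum>i\<in>{-2..2::int}. stiff_weight i * (t / (t\<^sup>2 + (m + real_of_int i)\<^sup>2))))
      = (\<Sum>i\<in>{-2..2::int}. (- stiff_weight i) * \<bar>m + real_of_int i\<bar> powr (a - 1 + 2 * real (1::nat))) * pi / (2 * cos (pi * a / 2))"
    unfolding set_lebesgue_integral_def pt
    using sum_rat_terms[OF a, where n=1 and e="\<lambda>i. - stiff_weight i" and m=m] by simp
  also have "cos (pi * a / 2) = - cos (pi * \<gamma> / 2)"
  proof -
    have e: "pi * a / 2 = pi * \<gamma> / 2 - pi" by (simp add: a_def field_simps)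
    show ?thesis unfolding e cos_diff by simp
  qed
  also have "a - 1 + 2 * real (1::nat) = \<gamma> - 1" by (simp add: a_def)
  finally show ?thesis by (simp add: sum_negf)
next
  case False
  then have g3: "\<gamma> > 3" using g by simp
  define a where "a = \<gamma> - 4"
  have a: "-1 < a" "a < 1" using g g3 by (auto simp: a_def)
  have pt: "indicator {0<..} t *\<^sub>R (t powr (\<gamma> - 1) * (\<Sum>i\<in>{-2..2::int}. stiff_weight i * (t / (t\<^sup>2 + (m + real_of_int i)\<^sup>2))))
      = (\<Sum>i\<in>{-2..2::int}. stiff_weight i * (indicator {0<..} t * (((m + real_of_int i)\<^sup>2)^2 * (t powr a / (t\<^sup>2 + (m + real_of_int i)\<^sup>2)))))" for t
  proof (cases "t > 0")
    case tp: True
    define P where "P = t powr a"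
    have tg: "t powr (\<gamma> - 1) = P * t^3"
    proof -
      have "t powr (\<gamma> - 1) = t powr (a + 3)" by (simp add: a_def)
      also have "\<dots> = P * t powr 3" unfolding P_def by (rule powr_add)
      finally show ?thesis using tp by (simp add: powr_numeral)
    qed
    have each: "t powr (\<gamma> - 1) * (stiff_weight i * (t / (t\<^sup>2 + (m + real_of_int i)\<^sup>2)))
        = stiff_weight i * (P * t\<^sup>2) - stiff_weight i * (m + real_of_int i)\<^sup>2 * P
          + stiff_weight i * (((m + real_of_int i)\<^sup>2)^2 * (P / (t\<^sup>2 + (m + real_of_int i)\<^sup>2)))" for i
    proof -
      have pos: "t\<^sup>2 + (m + real_of_int i)\<^sup>2 > 0" using tp by (simp add: add_pos_nonneg)
      show ?thesis unfolding tg using pos by (simp add: field_simps power2_eq_square power3_eq_cube)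
    qed
    have "t powr (\<gamma> - 1) * (\<Sum>i\<in>{-2..2::int}. stiff_weight i * (t / (t\<^sup>2 + (m + real_of_int i)\<^sup>2)))
        = (\<Sum>i\<in>{-2..2::int}. stiff_weight i * (P * t\<^sup>2) - stiff_weight i * (m + real_of_int i)\<^sup>2 * P
          + stiff_weight i * (((m + real_of_int i)\<^sup>2)^2 * (P / (t\<^sup>2 + (m + real_of_int i)\<^sup>2))))"
      unfolding sum_distrib_left by (rule sum.cong[OF refl each])
    also have "\<dots> = (\<Sum>i\<in>{-2..2::int}. stiff_weight i) * (P * t\<^sup>2) - (\<Sum>i\<in>{-2..2::int}. stiff_weight i * (m + real_of_int i)\<^sup>2) * P
          + (\<Sum>i\<in>{-2..2::int}. stiff_weight i * (((m + real_of_int i)\<^sup>2)^2 * (P / (t\<^sup>2 + (m + real_of_int i)\<^sup>2))))"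
      by (simp add: sum.distrib sum_subtractf sum_distrib_right)
    finally show ?thesis using tp by (simp add: weights_moment0 weights_moment2 P_def)
  qed simp
  have "(LINT t:{0<..}|lborel. t powr (\<gamma> - 1) * (\<Sum>i\<in>{-2..2::int}. stiff_weight i * (t / (t\<^sup>2 + (m + real_of_int i)\<^sup>2))))
      = (\<Sum>i\<in>{-2..2::int}. stiff_weight i * \<bar>m + real_of_int i\<bar> powr (a - 1 + 2 * real (2::nat))) * pi / (2 * cos (pi * a / 2))"
    unfolding set_lebesgue_integral_def pt
    using sum_rat_terms[OF a, where n=2 and e=stiff_weight and m=m] by simp
  also have "cos (pi * a / 2) = cos (pi * \<gamma> / 2)"
  proof -
    have e: "pi * a / 2 = pi * \<gamma> / 2 - 2 * pi" by (simp add: a_def field_simps)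
    show ?thesis unfolding e cos_diff by simp
  qed
  also have "a - 1 + 2 * real (2::nat) = \<gamma> - 1" by (simp add: a_def)
  finally show ?thesis .
qed



lemma one_minus_cos_bound: "0 \<le> 2 - 2 * cos u \<and> 2 - 2 * cos u \<le> u\<^sup>2 \<and> 2 - 2 * cos u \<le> (4::real)"
proof -
  have "cos u = 1 - 2 * sin (u/2) ^ 2" using cos_double_sin[of "u/2"] by simp
  then have e: "2 - 2 * cos u = 4 * (sin (u/2))\<^sup>2" by simp
  have "\<bar>sin (u/2)\<bar> \<le> \<bar>u/2\<bar>" by (rule abs_sin_x_le_abs_x)
  then have "(sin (u/2))\<^sup>2 \<le> (u/2)\<^sup>2"
    by (metis abs_ge_zero power2_abs power_mono)
  then have "2 - 2 * cos u \<le> u\<^sup>2" unfolding e by (simp add: power_divide)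
  moreover have "2 - 2 * cos u \<le> 4" using cos_ge_minus_one[of u] by linarith
  moreover have "0 \<le> 2 - 2 * cos u" using cos_le_one[of u] by simp
  ultimately show ?thesis by simp
qed

lemma G_integrable:
  fixes \<gamma> m :: real
  assumes g: "1 < \<gamma>" "\<gamma> < 4"
  shows "set_integrable lborel {0<..} (\<lambda>u. u powr (- \<gamma>) * ((2 - 2 * cos u)\<^sup>2 * cos (m * u)))"
proof -
  have "(\<lambda>x. x powr (4 - \<gamma>)) integrable_on {0<..1}"
    using g by (intro integrable_on_powr_from_0') auto
  then have a1: "(\<lambda>x. x powr (4 - \<gamma>)) absolutely_integrable_on {0<..1}"
    by (subst absolutely_integrable_on_iff_nonneg) auto
  have i1: "set_integrable lborel {0<..1} (\<lambda>x. x powr (4 - \<gamma>))"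
    by (rule abs_to_lborel(1)[OF _ _ a1]) auto
  have "((\<lambda>x. x powr (- \<gamma>)) has_integral - (1 powr (- \<gamma> + 1)) / (- \<gamma> + 1)) {1..}"
    using g by (intro has_integral_powr_to_inf) auto
  then have a2: "(\<lambda>x. x powr (- \<gamma>)) absolutely_integrable_on {1..}"
    by (subst absolutely_integrable_on_iff_nonneg) (auto simp: has_integral_integrable)
  have i2: "set_integrable lborel {1..} (\<lambda>x. x powr (- \<gamma>))"
    by (rule abs_to_lborel(1)[OF _ _ a2]) auto
  define B where "B u = indicator {0<..1} u *\<^sub>R u powr (4 - \<gamma>) + 16 * (indicator {1..} u *\<^sub>R u powr (- \<gamma>))" for u :: real
  have iB: "integrable lborel B"
    unfolding B_def using i1 i2 unfolding set_integrable_def by (intro Bochner_Integration.integrable_add integrable_mult_right)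
  show ?thesis unfolding set_integrable_def
  proof (rule Bochner_Integration.integrable_bound[OF iB])
    show "(\<lambda>u. indicator {0<..} u *\<^sub>R (u powr (- \<gamma>) * ((2 - 2 * cos u)\<^sup>2 * cos (m * u)))) \<in> borel_measurable lborel"
      by measurable
    show "AE x in lborel. norm (indicator {0<..} x *\<^sub>R (x powr (- \<gamma>) * ((2 - 2 * cos x)\<^sup>2 * cos (m * x)))) \<le> norm (B x)"
    proof (intro AE_I2)
      fix u :: real
      have bnd: "0 \<le> 2 - 2 * cos u" "2 - 2 * cos u \<le> u\<^sup>2" "2 - 2 * cos u \<le> 4" using one_minus_cos_bound[of u] by auto
      have Bnn: "B u \<ge> 0" unfolding B_def by (auto simp: indicator_def)
      have Gb: "\<bar>(2 - 2 * cos u)\<^sup>2 * cos (m * u)\<bar> \<le> (2 - 2 * cos u)\<^sup>2"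
        by (simp add: abs_mult mult_left_le)
      show "norm (indicator {0<..} u *\<^sub>R (u powr (- \<gamma>) * ((2 - 2 * cos u)\<^sup>2 * cos (m * u)))) \<le> norm (B u)"
      proof (cases "u > 0")
        case False then show ?thesis using Bnn by simp
      next
        case True
        have up: "0 < u powr (- \<gamma>)" using True by simp
        have "norm (indicator {0<..} u *\<^sub>R (u powr (- \<gamma>) * ((2 - 2 * cos u)\<^sup>2 * cos (m * u))))
            = u powr (- \<gamma>) * \<bar>(2 - 2 * cos u)\<^sup>2 * cos (m * u)\<bar>" using True up by (simp add: abs_mult)
        also have "\<dots> \<le> u powr (- \<gamma>) * (2 - 2 * cos u)\<^sup>2" using up Gb by (intro mult_left_mono) auto
        also have "\<dots> \<le> B u"
        proof (cases "u \<le> 1")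
          case True2: True
          have "(2 - 2 * cos u)\<^sup>2 \<le> (u\<^sup>2)\<^sup>2" using bnd by (intro power_mono) auto
          then have "u powr (- \<gamma>) * (2 - 2 * cos u)\<^sup>2 \<le> u powr (- \<gamma>) * u ^ 4"
            using up by (intro mult_left_mono) (auto simp: power_mult[symmetric])
          also have "u powr (- \<gamma>) * u ^ 4 = u powr (4 - \<gamma>)"
          proof -
            have "u powr (4 - \<gamma>) = u powr (4 + (- \<gamma>))" by simp
            also have "\<dots> = u powr 4 * u powr (- \<gamma>)" by (rule powr_add)
            also have "u powr 4 = u ^ 4" using True by (intro powr_numeral) simp
            finally show ?thesis by (simp add: mult.commute)
          qed
          also have "\<dots> \<le> B u" using True True2 by (simp add: B_def indicator_def)
          finally show ?thesis .
        next
          case False2: False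
          have "(2 - 2 * cos u)\<^sup>2 \<le> 4\<^sup>2" using bnd by (intro power_mono) auto
          then have "u powr (- \<gamma>) * (2 - 2 * cos u)\<^sup>2 \<le> u powr (- \<gamma>) * 16"
            using up by (intro mult_left_mono) auto
          also have "\<dots> \<le> B u" using True False2 by (simp add: B_def indicator_def)
          finally show ?thesis .
        qed
        also have "\<dots> = norm (B u)" using Bnn by simp
        finally show ?thesis .
      qed
    qed
  qed
qed

lemma J_value:
  fixes \<gamma> m :: real
  assumes g: "1 < \<gamma>" "\<gamma> < 4" "\<gamma> \<noteq> 3"
  shows "(LINT u:{0<..}|lborel. u powr (- \<gamma>) * ((2 - 2 * cos u)\<^sup>2 * cos (m * u)))
       = (\<Sum>i\<in>{-2..2::int}. stiff_weight i * \<bar>m + real_of_int i\<bar> powr (\<gamma> - 1)) * pi / (2 * cos (pi * \<gamma> / 2)) / Gamma \<gamma>"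
proof -
  have eqG: "(\<lambda>u. u powr (- \<gamma>) * (\<Sum>i\<in>{-2..2::int}. stiff_weight i * cos ((m + real_of_int i) * u)))
      = (\<lambda>u. u powr (- \<gamma>) * ((2 - 2 * cos u)\<^sup>2 * cos (m * u)))"
    by (simp add: weights_trig)
  have "Gamma \<gamma> * (LINT u:{0<..}|lborel. u powr (- \<gamma>) * (\<Sum>i\<in>{-2..2::int}. stiff_weight i * cos ((m + real_of_int i) * u)))
      = (LINT t:{0<..}|lborel. t powr (\<gamma> - 1) * (\<Sum>i\<in>{-2..2::int}. stiff_weight i * (t / (t\<^sup>2 + (m + real_of_int i)\<^sup>2))))"
    by (rule fubini_main[where c="\<lambda>i. m + real_of_int i"]) (use g G_integrable[OF g(1,2), of m] eqG in auto)
  also have "\<dots> = (\<Sum>i\<in>{-2..2::int}. stiff_weight i * \<bar>m + real_of_int i\<bar> powr (\<gamma> - 1)) * pi / (2 * cos (pi * \<gamma> / 2))"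
    by (rule t_integral[OF g])
  finally have fin: "Gamma \<gamma> * (LINT u:{0<..}|lborel. u powr (- \<gamma>) * ((2 - 2 * cos u)\<^sup>2 * cos (m * u)))
      = (\<Sum>i\<in>{-2..2::int}. stiff_weight i * \<bar>m + real_of_int i\<bar> powr (\<gamma> - 1)) * pi / (2 * cos (pi * \<gamma> / 2))"
    unfolding eqG .
  have "Gamma \<gamma> > 0" using g by (intro Gamma_real_pos) simp
  then have G0: "Gamma \<gamma> \<noteq> 0" by simp
  show ?thesis unfolding fin[symmetric] using G0 by simp
qed



definition tent :: "real \<Rightarrow> real \<Rightarrow> real \<Rightarrow> real" where
  "tent c h t = max 0 (1 - \<bar>t - c\<bar> / h)"

lemma ftc_piece:
  fixes \<xi> s r a b :: real
  assumes xi: "\<xi> \<noteq> 0" and a: "a \<le> b"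
  defines "A \<equiv> (\<lambda>z::complex. exp (- \<i> * z * of_real \<xi>) *
              (\<i> * (of_real s * z + of_real r) / of_real \<xi> + of_real s / (of_real \<xi>) ^ 2))"
  shows "((\<lambda>t. complex_of_real (s * t + r) * exp (- \<i> * complex_of_real (t * \<xi>)))
            has_integral (A (of_real b) - A (of_real a))) {a..b}"
proof -
  have d: "(A has_field_derivative ((of_real s * z + of_real r) * exp (- \<i> * z * of_real \<xi>))) (at z)" for z
  proof -
    have "(A has_field_derivative (exp (- \<i> * z * of_real \<xi>) * (- \<i> * of_real \<xi>) *
              (\<i> * (of_real s * z + of_real r) / of_real \<xi> + of_real s / (of_real \<xi>) ^ 2) +
              exp (- \<i> * z * of_real \<xi>) * (\<i> * of_real s / of_real \<xi>))) (at z)"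
      unfolding A_def using xi by (auto intro!: derivative_eq_intros)
    moreover have "exp (- \<i> * z * of_real \<xi>) * (- \<i> * of_real \<xi>) *
              (\<i> * (of_real s * z + of_real r) / of_real \<xi> + of_real s / (of_real \<xi>) ^ 2) +
              exp (- \<i> * z * of_real \<xi>) * (\<i> * of_real s / of_real \<xi>) = (of_real s * z + of_real r) * exp (- \<i> * z * of_real \<xi>)"
      using xi by (simp add: field_simps power2_eq_square)
    ultimately show ?thesis by simp
  qed
  have "((\<lambda>t. (of_real s * of_real t + of_real r) * exp (- \<i> * of_real t * of_real \<xi>)) has_integral
          ((\<lambda>t. A (of_real t)) b - (\<lambda>t. A (of_real t)) a)) {a..b}"
    by (intro fundamental_theorem_of_calculus a ballI has_vector_derivative_real_field d)
  then show ?thesis by (simp add: mult.assoc)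
qed



lemma continuous_tent: "continuous_on S (tent c h)"
  unfolding tent_def divide_inverse by (intro continuous_intros)

lemma fourier_tent:
  fixes c h \<xi> :: real
  assumes h: "h > 0" and xi: "\<xi> \<noteq> 0"
  shows "fourier (tent c h) \<xi> = complex_of_real (1 / sqrt (2 * pi)) *
           (exp (- \<i> * complex_of_real (c * \<xi>)) * complex_of_real ((2 - 2 * cos (h * \<xi>)) / (h * \<xi>\<^sup>2)))"
proof -
  define \<phi> where "\<phi> t = complex_of_real (tent c h t) * exp (- \<i> * complex_of_real (t * \<xi>))" for t
  define A where "A s r = (\<lambda>z::complex. exp (- \<i> * z * of_real \<xi>) *
              (\<i> * (of_real s * z + of_real r) / of_real \<xi> + of_real s / (of_real \<xi>) ^ 2))" for s r :: real
  have p1: "((\<lambda>t. complex_of_real ((1/h) * t + (h - c)/h) * exp (- \<i> * complex_of_real (t * \<xi>)))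
            has_integral (A (1/h) ((h - c)/h) (of_real c) - A (1/h) ((h - c)/h) (of_real (c - h)))) {c - h..c}"
    unfolding A_def using ftc_piece[OF xi, of "c - h" c "1/h" "(h - c)/h"] h by simp
  have p2: "((\<lambda>t. complex_of_real ((-1/h) * t + (c + h)/h) * exp (- \<i> * complex_of_real (t * \<xi>)))
            has_integral (A (-1/h) ((c + h)/h) (of_real (c + h)) - A (-1/h) ((c + h)/h) (of_real c))) {c..c + h}"
    unfolding A_def using ftc_piece[OF xi, of c "c + h" "-1/h" "(c + h)/h"] h by simp
  have q1: "(\<phi> has_integral (A (1/h) ((h - c)/h) (of_real c) - A (1/h) ((h - c)/h) (of_real (c - h)))) {c - h..c}"
  proof (rule has_integral_eq[OF _ p1])
    fix t assume "t \<in> {c - h..c}"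
    then have "tent c h t = (1/h) * t + (h - c)/h" using h by (auto simp: tent_def field_simps)
    then show "complex_of_real ((1/h) * t + (h - c)/h) * exp (- \<i> * complex_of_real (t * \<xi>)) = \<phi> t"
      by (simp add: \<phi>_def)
  qed
  have q2: "(\<phi> has_integral (A (-1/h) ((c + h)/h) (of_real (c + h)) - A (-1/h) ((c + h)/h) (of_real c))) {c..c + h}"
  proof (rule has_integral_eq[OF _ p2])
    fix t assume "t \<in> {c..c + h}"
    then have "tent c h t = (-1/h) * t + (c + h)/h" using h by (auto simp: tent_def field_simps)
    then show "complex_of_real ((-1/h) * t + (c + h)/h) * exp (- \<i> * complex_of_real (t * \<xi>)) = \<phi> t"
      by (simp add: \<phi>_def)
  qed
  define V where "V = (A (1/h) ((h - c)/h) (of_real c) - A (1/h) ((h - c)/h) (of_real (c - h))) +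
       (A (-1/h) ((c + h)/h) (of_real (c + h)) - A (-1/h) ((c + h)/h) (of_real c))"
  have qV: "(\<phi> has_integral V) {c - h..c + h}"
    unfolding V_def by (rule has_integral_combine[OF _ _ q1 q2]) (use h in auto)
  have phi0: "\<phi> t = indicator {c - h..c + h} t *\<^sub>R \<phi> t" for t
    using h by (auto simp: \<phi>_def tent_def indicator_def)
  have contphi: "continuous_on UNIV \<phi>"
    unfolding \<phi>_def by (intro continuous_intros continuous_on_compose2[OF continuous_tent[of UNIV c h]]) auto
  have "set_integrable lborel {c - h..c + h} \<phi>"
    by (rule borel_integrable_atLeastAtMost') (rule continuous_on_subset[OF contphi], auto)
  then have intphi: "integrable lborel \<phi>"
    unfolding set_integrable_def
  proof -
    assume "integrable lborel (\<lambda>x. indicator {c - h..c + h} x *\<^sub>R \<phi> x)"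
    moreover have "(\<lambda>x. indicator {c - h..c + h} x *\<^sub>R \<phi> x) = \<phi>" by (rule ext, rule phi0[symmetric])
    ultimately show "integrable lborel \<phi>" by simp
  qed
  have "((\<lambda>t. if t \<in> {c - h..c + h} then \<phi> t else 0) has_integral V) UNIV"
    using qV has_integral_restrict_UNIV[of "{c - h..c + h}" \<phi> V] by blast
  moreover have "(\<lambda>t. if t \<in> {c - h..c + h} then \<phi> t else 0) = \<phi>"
  proof
    fix t show "(if t \<in> {c - h..c + h} then \<phi> t else 0) = \<phi> t"
      using phi0[of t] by (cases "t \<in> {c - h..c + h}") auto
  qed
  ultimately have "(\<phi> has_integral V) UNIV" by simp
  then have LV: "integral\<^sup>L lborel \<phi> = V"
    using has_integral_integral_lborel[OF intphi] by (rule has_integral_unique[rotated])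
  define E0 where "E0 = exp (- \<i> * complex_of_real (c * \<xi>))"
  define ep where "ep = exp (\<i> * complex_of_real (h * \<xi>))"
  define em where "em = exp (- (\<i> * complex_of_real (h * \<xi>)))"
  have Em: "exp (- \<i> * complex_of_real (c - h) * complex_of_real \<xi>) = E0 * ep"
    unfolding E0_def ep_def exp_add[symmetric] by (simp add: algebra_simps)
  have Ep: "exp (- \<i> * complex_of_real (c + h) * complex_of_real \<xi>) = E0 * em"
    unfolding E0_def em_def exp_add[symmetric] by (simp add: algebra_simps)
  have Ec: "exp (- \<i> * complex_of_real c * complex_of_real \<xi>) = E0"
    unfolding E0_def by (simp add: mult.assoc)
  have cs: "ep + em = 2 * complex_of_real (cos (h * \<xi>))"
  proof -
    have "complex_of_real (cos (h * \<xi>)) = cos (complex_of_real (h * \<xi>))" by (rule cos_of_real[symmetric])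
    also have "\<dots> = (ep + em) / 2" unfolding ep_def em_def by (rule cos_exp_eq)
    finally show ?thesis by (simp add: mult.commute)
  qed
  have "V = E0 * ((2 - (ep + em)) / (complex_of_real h * (complex_of_real \<xi>)\<^sup>2))"
    unfolding V_def A_def Em Ep Ec using h xi by (simp add: field_simps power2_eq_square)
  also have "\<dots> = E0 * complex_of_real ((2 - 2 * cos (h * \<xi>)) / (h * \<xi>\<^sup>2))"
    unfolding cs by simp
  finally have "V = E0 * complex_of_real ((2 - 2 * cos (h * \<xi>)) / (h * \<xi>\<^sup>2))" .
  moreover have "fourier (tent c h) \<xi> = complex_of_real (1 / sqrt (2 * pi)) * integral\<^sup>L lborel \<phi>"
    unfolding fourier_def \<phi>_def by (rule refl)
  ultimately show ?thesis using LV by (simp add: E0_def)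
qed


lemma even_int:
  fixes f :: "real \<Rightarrow> real"
  assumes ev: "\<And>x. f (- x) = f x" and f0: "f 0 = 0" and int: "set_integrable lborel {0<..} f"
  shows "integrable lborel f" "integral\<^sup>L lborel f = 2 * (LINT x:{0<..}|lborel. f x)"
proof -
  define g where "g x = indicator {0<..} x *\<^sub>R f x" for x
  have ig: "integrable lborel g" using int unfolding set_integrable_def g_def by simp
  have ig2: "integrable lborel (\<lambda>x. g (0 + (-1) * x))"
    using ig by (subst lborel_integrable_real_affine_iff) auto
  have fg: "f x = g x + g (0 + (-1) * x)" for x
    using f0 ev[of x] by (cases "x > 0"; cases "x < 0") (auto simp: g_def indicator_def)
  have fe: "f = (\<lambda>x. g x + g (0 + (-1) * x))" using fg by (rule ext)
  show "integrable lborel f" unfolding fe using ig ig2 by (rule Bochner_Integration.integrable_add)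
  have "integral\<^sup>L lborel g = \<bar>-1\<bar> *\<^sub>R integral\<^sup>L lborel (\<lambda>x. g (0 + (-1) * x))"
    by (rule lborel_integral_real_affine) simp
  then have "integral\<^sup>L lborel (\<lambda>x. g (0 + (-1) * x)) = integral\<^sup>L lborel g" by simp
  moreover have "integral\<^sup>L lborel f = integral\<^sup>L lborel g + integral\<^sup>L lborel (\<lambda>x. g (0 + (-1) * x))"
    by (subst fe) (rule Bochner_Integration.integral_add[OF ig ig2])
  moreover have "integral\<^sup>L lborel g = (LINT x:{0<..}|lborel. f x)"
    by (simp add: set_lebesgue_integral_def g_def[abs_def])
  ultimately show "integral\<^sup>L lborel f = 2 * (LINT x:{0<..}|lborel. f x)" by simp
qed

lemma odd_int_zero:
  fixes f :: "real \<Rightarrow> real"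
  assumes od: "\<And>x. f (- x) = - f x"
  shows "integral\<^sup>L lborel f = 0"
proof -
  have "integral\<^sup>L lborel f = \<bar>-1\<bar> *\<^sub>R integral\<^sup>L lborel (\<lambda>x. f (0 + (-1) * x))"
    by (rule lborel_integral_real_affine) simp
  also have "\<dots> = - integral\<^sup>L lborel f" using od by simp
  finally show ?thesis by simp
qed

definition Bf :: "real \<Rightarrow> real \<Rightarrow> real" where
  "Bf s u = \<bar>u\<bar> powr (2 * s) * (2 - 2 * cos u)\<^sup>2 / u ^ 4"

lemma Bf_even: "Bf s (- u) = Bf s u"
  by (simp add: Bf_def)

lemma Bf_zero: "Bf s 0 = 0"
  by (simp add: Bf_def)

lemma Bf_nonneg: "Bf s u \<ge> 0"
  by (simp add: Bf_def)

lemma Bf_pos: "u > 0 \<Longrightarrow> Bf s u * cos (m * u) = u powr (- (4 - 2 * s)) * ((2 - 2 * cos u)\<^sup>2 * cos (m * u))"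
proof -
  assume u: "u > 0"
  have "u powr (- (4 - 2 * s)) = u powr (2 * s) / u powr 4"
    by (simp add: powr_diff[symmetric])
  also have "u powr 4 = u ^ 4" using u by (intro powr_numeral) simp
  finally have "u powr (- (4 - 2 * s)) = u powr (2 * s) / u ^ 4" .
  then show ?thesis using u by (simp add: Bf_def)
qed

lemma Bf_cos_setint:
  assumes s: "0 < s" "s < 3/2"
  shows "set_integrable lborel {0<..} (\<lambda>u. Bf s u * cos (m * u))"
proof -
  have "set_integrable lborel {0<..} (\<lambda>u. u powr (- (4 - 2 * s)) * ((2 - 2 * cos u)\<^sup>2 * cos (m * u)))"
    using s by (intro G_integrable) auto
  then show ?thesis unfolding set_integrable_def
  proof (rule Bochner_Integration.integrable_cong[THEN iffD1, OF refl, rotated])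
    fix x :: real
    show "indicator {0<..} x *\<^sub>R (x powr (- (4 - 2 * s)) * ((2 - 2 * cos x)\<^sup>2 * cos (m * x))) =
          indicator {0<..} x *\<^sub>R (Bf s x * cos (m * x))"
    proof (cases "x > 0")
      case True then show ?thesis by (simp only: Bf_pos)
    qed simp
  qed
qed

lemma Bf_cos_int:
  assumes s: "0 < s" "s < 3/2" "s \<noteq> 1/2"
  shows "integrable lborel (\<lambda>u. Bf s u * cos (m * u))"
        "integral\<^sup>L lborel (\<lambda>u. Bf s u * cos (m * u)) =
          2 * ((\<Sum>i\<in>{-2..2::int}. stiff_weight i * \<bar>m + real_of_int i\<bar> powr (3 - 2 * s)) * pi / (2 * cos (pi * s)) / Gamma (4 - 2 * s))"
proof -
  have ev: "Bf s (- u) * cos (m * (- u)) = Bf s u * cos (m * u)" for u by (simp add: Bf_even)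
  note E = even_int[of "\<lambda>u. Bf s u * cos (m * u)", OF ev _ Bf_cos_setint[OF s(1,2)]]
  show "integrable lborel (\<lambda>u. Bf s u * cos (m * u))" using E(1) by (simp add: Bf_zero)
  have "(LINT u:{0<..}|lborel. Bf s u * cos (m * u)) = (LINT u:{0<..}|lborel. u powr (- (4 - 2 * s)) * ((2 - 2 * cos u)\<^sup>2 * cos (m * u)))"
    by (intro set_lebesgue_integral_cong) (auto simp: Bf_pos)
  also have "\<dots> = (\<Sum>i\<in>{-2..2::int}. stiff_weight i * \<bar>m + real_of_int i\<bar> powr ((4 - 2 * s) - 1)) * pi / (2 * cos (pi * (4 - 2 * s) / 2)) / Gamma (4 - 2 * s)"
    using s by (intro J_value) auto
  also have "cos (pi * (4 - 2 * s) / 2) = cos (pi * s)"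
  proof -
    have e: "pi * (4 - 2 * s) / 2 = 2 * pi - pi * s" by (simp add: field_simps)
    show ?thesis unfolding e cos_diff by simp
  qed
  also have "(4 - 2 * s) - 1 = 3 - 2 * s" by simp
  finally show "integral\<^sup>L lborel (\<lambda>u. Bf s u * cos (m * u)) =
          2 * ((\<Sum>i\<in>{-2..2::int}. stiff_weight i * \<bar>m + real_of_int i\<bar> powr (3 - 2 * s)) * pi / (2 * cos (pi * s)) / Gamma (4 - 2 * s))"
    using E(2) by (simp add: Bf_zero)
qed

lemma Bf_sin:
  assumes s: "0 < s" "s < 3/2"
  shows "integrable lborel (\<lambda>u. Bf s u * sin (m * u))" "integral\<^sup>L lborel (\<lambda>u. Bf s u * sin (m * u)) = 0"
proof -
  have ev: "Bf s (- u) * cos (0 * (- u)) = Bf s u * cos (0 * u)" for u by (simp add: Bf_even)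
  have "integrable lborel (\<lambda>u. Bf s u * cos (0 * u))"
    using even_int(1)[of "\<lambda>u. Bf s u * cos (0 * u)", OF ev _ Bf_cos_setint[OF s]] by (simp add: Bf_zero)
  then have iB: "integrable lborel (Bf s)" by simp
  show "integrable lborel (\<lambda>u. Bf s u * sin (m * u))"
  proof (rule Bochner_Integration.integrable_bound[OF iB])
    show "AE x in lborel. norm (Bf s x * sin (m * x)) \<le> norm (Bf s x)"
      by (intro AE_I2) (simp add: abs_mult Bf_nonneg mult_left_le)
  qed (simp add: Bf_def)
  show "integral\<^sup>L lborel (\<lambda>u. Bf s u * sin (m * u)) = 0"
    by (rule odd_int_zero) (simp add: Bf_even)
qed



lemma pointwise:
  fixes cj ck h s \<xi> n :: real
  assumes h: "h > 0" and s: "s > 0" and d: "cj - ck = n * h"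
  shows "complex_of_real (\<bar>\<xi>\<bar> powr (2 * s)) * fourier (tent cj h) \<xi> * cnj (fourier (tent ck h) \<xi>)
     = complex_of_real (h powr (2 - 2 * s) / (2 * pi) * (Bf s (h * \<xi>) * cos (n * (h * \<xi>))))
       - \<i> * complex_of_real (h powr (2 - 2 * s) / (2 * pi) * (Bf s (h * \<xi>) * sin (n * (h * \<xi>))))"
proof (cases "\<xi> = 0")
  case True then show ?thesis using s by (simp add: Bf_zero)
next
  case False
  define K where "K = (2 - 2 * cos (h * \<xi>)) / (h * \<xi>\<^sup>2)"
  define P where "P = \<bar>\<xi>\<bar> powr (2 * s) * K\<^sup>2 / (2 * pi)"
  have PB: "h powr (2 - 2 * s) / (2 * pi) * Bf s (h * \<xi>) = P"
  proof -
    define A where "A = \<bar>\<xi>\<bar> powr (2 * s)"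
    define c where "c = 2 - 2 * cos (h * \<xi>)"
    define H where "H = h powr (2 - 2 * s)"
    define G where "G = h powr (2 * s)"
    have HG: "H * G = h\<^sup>2" unfolding H_def G_def using h by (simp add: powr_add[symmetric])
    have Bf_eq: "Bf s (h * \<xi>) = G * A * c\<^sup>2 / (h * \<xi>) ^ 4"
      unfolding Bf_def A_def c_def G_def using h by (simp add: abs_mult powr_mult)
    have "H / (2 * pi) * Bf s (h * \<xi>) = (H * G) * (A * c\<^sup>2 / (h * \<xi>) ^ 4) / (2 * pi)"
      unfolding Bf_eq by (simp add: mult.commute mult.left_commute mult.assoc)
    also have "\<dots> = A * (c / (h * \<xi>\<^sup>2))\<^sup>2 / (2 * pi)"
      unfolding HG using h False by (simp add: field_simps power2_eq_square power4_eq_xxxx)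
    finally show ?thesis unfolding P_def K_def A_def c_def H_def .
  qed
  have cnjE: "cnj (exp (- \<i> * complex_of_real (ck * \<xi>))) = exp (\<i> * complex_of_real (ck * \<xi>))"
    by (simp add: exp_cnj)
  have EE: "exp (- \<i> * complex_of_real (cj * \<xi>)) * exp (\<i> * complex_of_real (ck * \<xi>))
      = complex_of_real (cos (n * (h * \<xi>))) - \<i> * complex_of_real (sin (n * (h * \<xi>)))"
  proof -
    have "exp (- \<i> * complex_of_real (cj * \<xi>)) * exp (\<i> * complex_of_real (ck * \<xi>))
        = exp (\<i> * complex_of_real (- (n * (h * \<xi>))))"
      unfolding exp_add[symmetric] using d
      by (simp add: algebra_simps of_real_mult[symmetric] of_real_diff[symmetric] del: of_real_mult of_real_diff)
    also have "\<dots> = cos (complex_of_real (- (n * (h * \<xi>)))) + \<i> * sin (complex_of_real (- (n * (h * \<xi>))))"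
      by (rule exp_Euler)
    also have "\<dots> = complex_of_real (cos (n * (h * \<xi>))) - \<i> * complex_of_real (sin (n * (h * \<xi>)))"
      by (simp add: cos_of_real[symmetric] sin_of_real[symmetric] del: cos_of_real sin_of_real)
    finally show ?thesis .
  qed
  have c0: "complex_of_real (1 / sqrt (2 * pi)) * complex_of_real (1 / sqrt (2 * pi)) = complex_of_real (1 / (2 * pi))"
    by (simp add: of_real_mult[symmetric] del: of_real_mult)
  have "complex_of_real (\<bar>\<xi>\<bar> powr (2 * s)) * fourier (tent cj h) \<xi> * cnj (fourier (tent ck h) \<xi>)
      = complex_of_real (\<bar>\<xi>\<bar> powr (2 * s)) * (complex_of_real (1 / sqrt (2 * pi)) * complex_of_real (1 / sqrt (2 * pi)))
        * complex_of_real K * complex_of_real K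
        * (exp (- \<i> * complex_of_real (cj * \<xi>)) * cnj (exp (- \<i> * complex_of_real (ck * \<xi>))))"
    unfolding fourier_tent[OF h False] K_def[symmetric] by (simp only: complex_cnj_mult complex_cnj_complex_of_real mult_ac)
  also have "\<dots> = complex_of_real P * (complex_of_real (cos (n * (h * \<xi>))) - \<i> * complex_of_real (sin (n * (h * \<xi>))))"
    unfolding c0 cnjE EE P_def by (simp add: power2_eq_square)
  also have "\<dots> = complex_of_real (P * cos (n * (h * \<xi>))) - \<i> * complex_of_real (P * sin (n * (h * \<xi>)))"
    by (simp add: algebra_simps)
  finally show ?thesis unfolding PB[symmetric] by (simp add: mult.assoc)
qed



lemma affine_scale:
  fixes g :: "real \<Rightarrow> real" and h :: real
  assumes h: "h > 0" and ig: "integrable lborel g"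
  shows "integrable lborel (\<lambda>\<xi>. g (h * \<xi>))" "integral\<^sup>L lborel (\<lambda>\<xi>. g (h * \<xi>)) = integral\<^sup>L lborel g / h"
proof -
  show "integrable lborel (\<lambda>\<xi>. g (h * \<xi>))"
    using lborel_integrable_real_affine_iff[of h g 0] ig h by simp
  have "integral\<^sup>L lborel g = \<bar>h\<bar> *\<^sub>R integral\<^sup>L lborel (\<lambda>x. g (0 + h * x))"
    using h by (intro lborel_integral_real_affine) simp
  then show "integral\<^sup>L lborel (\<lambda>\<xi>. g (h * \<xi>)) = integral\<^sup>L lborel g / h" using h by simp
qed

lemma stiff_value:
  fixes cj ck h s n :: real
  assumes h: "h > 0" and s: "0 < s" "s < 3/2" "s \<noteq> 1/2" and d: "cj - ck = n * h"
  shows "(LINT \<xi>|lborel. complex_of_real (\<bar>\<xi>\<bar> powr (2 * s)) * fourier (tent cj h) \<xi> * cnj (fourier (tent ck h) \<xi>))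
     = complex_of_real (C_hat s * h powr (1 - 2 * s) *
         (\<Sum>i\<in>{-2..2::int}. stiff_weight i * \<bar>\<bar>n\<bar> + real_of_int i\<bar> powr (3 - 2 * s)))"
proof -
  define C0 where "C0 = h powr (2 - 2 * s) / (2 * pi)"
  define S where "S = (\<Sum>i\<in>{-2..2::int}. stiff_weight i * \<bar>\<bar>n\<bar> + real_of_int i\<bar> powr (3 - 2 * s))"
  have cabs: "cos (n * u) = cos (\<bar>n\<bar> * u)" for u
    by (cases "n \<ge> 0") (auto simp: abs_if)
  have ig1: "integrable lborel (\<lambda>u. Bf s u * cos (n * u))"
    unfolding cabs using Bf_cos_int(1)[OF s, of "\<bar>n\<bar>"] .
  have vg1: "integral\<^sup>L lborel (\<lambda>u. Bf s u * cos (n * u)) = 2 * (S * pi / (2 * cos (pi * s)) / Gamma (4 - 2 * s))"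
    unfolding cabs S_def using Bf_cos_int(2)[OF s, of "\<bar>n\<bar>"] .
  note A1 = affine_scale[OF h ig1]
  note A2 = affine_scale[OF h Bf_sin(1)[OF s(1,2), of n]]
  have i1: "integrable lborel (\<lambda>\<xi>. C0 * (Bf s (h * \<xi>) * cos (n * (h * \<xi>))))"
    using A1(1) by (rule integrable_mult_right)
  have i2: "integrable lborel (\<lambda>\<xi>. C0 * (Bf s (h * \<xi>) * sin (n * (h * \<xi>))))"
    using A2(1) by (rule integrable_mult_right)
  have v1: "integral\<^sup>L lborel (\<lambda>\<xi>. C0 * (Bf s (h * \<xi>) * cos (n * (h * \<xi>)))) = C0 * (2 * (S * pi / (2 * cos (pi * s)) / Gamma (4 - 2 * s))) / h"
    using A1(2) vg1 by simp
  have v2: "integral\<^sup>L lborel (\<lambda>\<xi>. C0 * (Bf s (h * \<xi>) * sin (n * (h * \<xi>)))) = 0"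
    using A2(2) Bf_sin(2)[OF s(1,2), of n] by simp
  have "(LINT \<xi>|lborel. complex_of_real (\<bar>\<xi>\<bar> powr (2 * s)) * fourier (tent cj h) \<xi> * cnj (fourier (tent ck h) \<xi>))
      = (LINT \<xi>|lborel. complex_of_real (C0 * (Bf s (h * \<xi>) * cos (n * (h * \<xi>))))
          - \<i> * complex_of_real (C0 * (Bf s (h * \<xi>) * sin (n * (h * \<xi>)))))"
    unfolding C0_def using pointwise[OF h s(1) d] by simp
  also have "\<dots> = complex_of_real (integral\<^sup>L lborel (\<lambda>\<xi>. C0 * (Bf s (h * \<xi>) * cos (n * (h * \<xi>)))))
       - \<i> * complex_of_real (integral\<^sup>L lborel (\<lambda>\<xi>. C0 * (Bf s (h * \<xi>) * sin (n * (h * \<xi>)))))"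
  proof -
    have ci1: "complex_integrable lborel (\<lambda>\<xi>. complex_of_real (C0 * (Bf s (h * \<xi>) * cos (n * (h * \<xi>)))))"
      using i1 by (simp only: complex_of_real_integrable_eq)
    have "complex_integrable lborel (\<lambda>\<xi>. complex_of_real (C0 * (Bf s (h * \<xi>) * sin (n * (h * \<xi>)))))"
      using i2 by (simp only: complex_of_real_integrable_eq)
    then have ci2: "complex_integrable lborel (\<lambda>\<xi>. \<i> * complex_of_real (C0 * (Bf s (h * \<xi>) * sin (n * (h * \<xi>)))))"
      by (rule integrable_mult_right)
    show ?thesis
      by (simp only: Bochner_Integration.integral_diff[OF ci1 ci2] integral_mult_right_zero integral_complex_of_real)
  qed
  also have "\<dots> = complex_of_real (C0 * (2 * (S * pi / (2 * cos (pi * s)) / Gamma (4 - 2 * s))) / h)"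
    unfolding v1 v2 by simp
  also have "C0 * (2 * (S * pi / (2 * cos (pi * s)) / Gamma (4 - 2 * s))) / h = C_hat s * h powr (1 - 2 * s) * S"
  proof -
    have "h powr (2 - 2 * s) = h powr ((1 - 2 * s) + 1)" by simp
    also have "\<dots> = h powr (1 - 2 * s) * h powr 1" by (rule powr_add)
    finally have "h powr (2 - 2 * s) = h powr (1 - 2 * s) * h" using h by simp
    then show ?thesis using h unfolding C0_def C_hat_def by (simp add: field_simps mult.commute[of s pi])
  qed
  finally show ?thesis unfolding S_def .
qed



lemma hat_tent:
  fixes x :: "nat \<Rightarrow> real"
  assumes h: "h > 0" and l: "x j - x (j - 1) = h" and r: "x (j + 1) - x j = h"
  shows "hat x j = tent (x j) h"
proof
  fix t
  define c where "c = x j"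
  have l': "x (j - 1) = c - h" and r': "x (j + 1) = c + h" using l r by (auto simp: c_def)
  show "hat x j t = tent (x j) h t"
    unfolding hat_def tent_def c_def[symmetric] l' r'
  proof -
    consider "c - h \<le> t \<and> t \<le> c" | "c < t \<and> t \<le> c + h" | "t < c - h" | "t > c + h" by linarith
    then show "(if c - h \<le> t \<and> t \<le> c then (t - (c - h)) / (c - (c - h))
          else if c < t \<and> t \<le> c + h then (c + h - t) / (c + h - c) else 0) = max 0 (1 - \<bar>t - c\<bar> / h)"
    proof cases
      case 1
      have "(t - (c - h)) / h = 1 - \<bar>t - c\<bar> / h" using 1 h by (simp add: abs_if field_simps)
      moreover have "0 \<le> (t - (c - h)) / h" using 1 h by simp
      ultimately show ?thesis using 1 by simp
    next
      case 2
      have "(c + h - t) / h = 1 - \<bar>t - c\<bar> / h" using 2 h by (simp add: abs_if field_simps)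
      moreover have "0 \<le> (c + h - t) / h" using 2 h by simp
      ultimately show ?thesis using 2 by simp
    next
      case 3
      have "1 - \<bar>t - c\<bar> / h \<le> 0" using 3 h by (simp add: abs_if field_simps)
      then show ?thesis using 3 h by auto
    next
      case 4
      have "1 - \<bar>t - c\<bar> / h \<le> 0" using 4 h by (simp add: abs_if field_simps)
      then show ?thesis using 4 h by auto
    qed
  qed
qed

theorem mainTheorem3:
  fixes x :: "nat \<Rightarrow> real" and a b h s :: real and N :: nat
  assumes "x 0 = a" and "x N = b" and "h > 0"
    and "\<And>j. 1 \<le> j \<Longrightarrow> j \<le> N \<Longrightarrow> x j - x (j - 1) = h"
    and "0 < s" and "s < 3 / 2" and "s \<noteq> 1 / 2"
  shows "(\<forall>j k. 1 \<le> j \<and> j \<le> N - 1 \<and> 1 \<le> k \<and> k \<le> N - 1 \<longrightarrow>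
            frac_stiff s x j k =
              complex_of_real (C_hat s * h powr (1 - 2 * s) *
                (\<Sum>i\<in>{-2..2::int}. stiff_weight i *
                   \<bar>real_of_int (\<bar>int k - int j\<bar> + i)\<bar> powr (3 - 2 * s))))
       \<and> (\<forall>j k j' k'. 1 \<le> j \<and> j \<le> N - 1 \<and> 1 \<le> k \<and> k \<le> N - 1 \<and>
            1 \<le> j' \<and> j' \<le> N - 1 \<and> 1 \<le> k' \<and> k' \<le> N - 1 \<and>
            int k - int j = int k' - int j' \<longrightarrow> frac_stiff s x j k = frac_stiff s x j' k')"
proof -
  note h = \<open>h > 0\<close> and step = assms(4) and s = assms(5,6,7)
  have xlin: "j \<le> N \<Longrightarrow> x j = a + real j * h" for j
  proof (induction j)
    case 0 then show ?case using assms(1) by simp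
  next
    case (Suc j)
    then have "x (Suc j) - x j = h" using step[of "Suc j"] by simp
    then show ?case using Suc by (simp add: algebra_simps)
  qed
  have hatT: "hat x j = tent (x j) h" if "1 \<le> j" "j \<le> N - 1" for j
  proof (rule hat_tent[OF h])
    show "x j - x (j - 1) = h" using step[of j] that by simp
    show "x (j + 1) - x j = h" using step[of "j + 1"] that by simp
  qed
  have first: "frac_stiff s x j k =
              complex_of_real (C_hat s * h powr (1 - 2 * s) *
                (\<Sum>i\<in>{-2..2::int}. stiff_weight i *
                   \<bar>real_of_int (\<bar>int k - int j\<bar> + i)\<bar> powr (3 - 2 * s)))"
    if jk: "1 \<le> j" "j \<le> N - 1" "1 \<le> k" "k \<le> N - 1" for j k
  proof -
    define n where "n = real_of_int (int j - int k)"
    have d: "x j - x k = n * h" using xlin[of j] xlin[of k] jk unfolding n_def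
      by (simp add: algebra_simps of_nat_diff)
    have nabs: "\<bar>n\<bar> + real_of_int i = real_of_int (\<bar>int k - int j\<bar> + i)" for i
      unfolding n_def by simp
    have "frac_stiff s x j k = (LINT \<xi>|lborel. complex_of_real (\<bar>\<xi>\<bar> powr (2 * s)) * fourier (tent (x j) h) \<xi> * cnj (fourier (tent (x k) h) \<xi>))"
      unfolding frac_stiff_def hatT[OF jk(1,2)] hatT[OF jk(3,4)] ..
    also have "\<dots> = complex_of_real (C_hat s * h powr (1 - 2 * s) *
         (\<Sum>i\<in>{-2..2::int}. stiff_weight i * \<bar>\<bar>n\<bar> + real_of_int i\<bar> powr (3 - 2 * s)))"
      by (rule stiff_value[OF h s d])
    finally show ?thesis unfolding nabs .
  qed
  show ?thesis
  proof (intro conjI allI impI)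
    fix j k assume "1 \<le> j \<and> j \<le> N - 1 \<and> 1 \<le> k \<and> k \<le> N - 1"
    then show "frac_stiff s x j k =
              complex_of_real (C_hat s * h powr (1 - 2 * s) *
                (\<Sum>i\<in>{-2..2::int}. stiff_weight i *
                   \<bar>real_of_int (\<bar>int k - int j\<bar> + i)\<bar> powr (3 - 2 * s)))"
      using first by blast
  next
    fix j k j' k' assume H: "1 \<le> j \<and> j \<le> N - 1 \<and> 1 \<le> k \<and> k \<le> N - 1 \<and>
            1 \<le> j' \<and> j' \<le> N - 1 \<and> 1 \<le> k' \<and> k' \<le> N - 1 \<and>
            int k - int j = int k' - int j'"
    then show "frac_stiff s x j k = frac_stiff s x j' k'"
      using first[of j k] first[of j' k'] by simp
  qed
qed


end
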